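(* Let $G$ be a graph with an assignment $g\colon V(G)\to\mathbb{N}$ (positive integers), and let $v\in V(G)$. Let $G':=G-v$ and let $g'\colon V(G')\to\mathbb{N}$ be such that $g'(x)=g(x)$ for every $x\in V(G)\setminus(\{v\}\cup N_G(v))$. If for some integer $q>\mathrm{HG}_{g'}(G')$ we have \[\frac{g(v)}{q}+\sum_{w\in N_G(v)}\frac{g(w)}{g'(w)+1}<1,\] then $q>\mathrm{HG}_g(G)$.
   Context: Multiple-guess hat game: for a graph $G$, an assignment $g\colon V(G)\to\mathbb{N}$ of positive integers and $q$ colours, a strategy is a family $(f_v)_{v\in V(G)}$ where $f_v\colon[q]^{N_G(v)}\to\binom{[q]}{\le g(v)}$ assigns to each colouring of the neighbourhood of $v$ a set of at most $g(v)$ colours. The strategy is winning if for every colouring $c\colon V(G)\to[q]$ there is $v\in V(G)$ with $c(v)\in f_v((c(w))_{w\in N_G(v)})$. $\mathrm{HG}_g(G)$ is the largest $q$ for which a winning strategy exists. *)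

theory Defs
  imports Complex_Main "HOL-Library.FuncSet"
begin

definition simple_graph :: "'a set \<Rightarrow> ('a \<Rightarrow> 'a \<Rightarrow> bool) \<Rightarrow> bool" where
  "simple_graph V E \<longleftrightarrow> finite V \<and> (\<forall>x y. E x y \<longrightarrow> E y x) \<and> (\<forall>x. \<not> E x x)
     \<and> (\<forall>x y. E x y \<longrightarrow> x \<in> V \<and> y \<in> V)"

definition nbhd :: "'a set \<Rightarrow> ('a \<Rightarrow> 'a \<Rightarrow> bool) \<Rightarrow> 'a \<Rightarrow> 'a set" where
  "nbhd V E x = {w \<in> V. E x w}"

definition del_vertex_edges :: "('a \<Rightarrow> 'a \<Rightarrow> bool) \<Rightarrow> 'a \<Rightarrow> 'a \<Rightarrow> 'a \<Rightarrow> bool" where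
  "del_vertex_edges E v = (\<lambda>x y. E x y \<and> x \<noteq> v \<and> y \<noteq> v)"

text \<open>Colours are [q] = {0..<q}. A strategy assigns to each vertex x and each colouring
of N(x) (an extensional function N(x) \<rightarrow> [q]) a set of at most g(x) colours.\<close>
definition is_strategy :: "'a set \<Rightarrow> ('a \<Rightarrow> 'a \<Rightarrow> bool) \<Rightarrow> ('a \<Rightarrow> nat) \<Rightarrow> nat
    \<Rightarrow> ('a \<Rightarrow> ('a \<Rightarrow> nat) \<Rightarrow> nat set) \<Rightarrow> bool" where
  "is_strategy V E g q f \<longleftrightarrow>
     (\<forall>x\<in>V. \<forall>c\<in>nbhd V E x \<rightarrow>\<^sub>E {..<q}. f x c \<subseteq> {..<q} \<and> card (f x c) \<le> g x)"

definition is_winning :: "'a set \<Rightarrow> ('a \<Rightarrow> 'a \<Rightarrow> bool) \<Rightarrow> ('a \<Rightarrow> nat) \<Rightarrow> nat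
    \<Rightarrow> ('a \<Rightarrow> ('a \<Rightarrow> nat) \<Rightarrow> nat set) \<Rightarrow> bool" where
  "is_winning V E g q f \<longleftrightarrow> is_strategy V E g q f \<and>
     (\<forall>c\<in>V \<rightarrow>\<^sub>E {..<q}. \<exists>x\<in>V. c x \<in> f x (restrict c (nbhd V E x)))"

definition has_winning :: "'a set \<Rightarrow> ('a \<Rightarrow> 'a \<Rightarrow> bool) \<Rightarrow> ('a \<Rightarrow> nat) \<Rightarrow> nat \<Rightarrow> bool" where
  "has_winning V E g q \<longleftrightarrow> (\<exists>f. is_winning V E g q f)"

definition HG :: "'a set \<Rightarrow> ('a \<Rightarrow> 'a \<Rightarrow> bool) \<Rightarrow> ('a \<Rightarrow> nat) \<Rightarrow> nat" where
  "HG V E g = Sup {q. has_winning V E g q}"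

end

theory Submission
  imports Defs
begin

lemma exists_small_set:
  fixes m :: "nat \<Rightarrow> nat"
  assumes "finite B" "(\<Sum>b\<in>B. m b) \<le> T"
  shows "\<exists>S\<subseteq>B. card S \<le> k \<and> (\<forall>b\<in>B - S. m b * (k+1) \<le> T)"
proof -
  define S where "S = {b\<in>B. m b * (k+1) > T}"
  have "card S \<le> k"
  proof (rule ccontr)
    assume "\<not> card S \<le> k"
    hence ck: "card S \<ge> k+1" by simp
    have fS: "finite S" using assms(1) S_def by simp
    have "(k+1) * (T+1) \<le> card S * (T+1)" using ck by (rule mult_right_mono) simp
    also have "\<dots> = (\<Sum>b\<in>S. T+1)" by simp
    also have "\<dots> \<le> (\<Sum>b\<in>S. m b * (k+1))"
      by (rule sum_mono) (auto simp: S_def)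
    also have "\<dots> = (k+1) * (\<Sum>b\<in>S. m b)" by (simp add: sum_distrib_left mult.commute)
    also have "(\<Sum>b\<in>S. m b) \<le> (\<Sum>b\<in>B. m b)"
      by (rule sum_mono2) (auto simp: S_def assms(1))
    hence "(k+1) * (\<Sum>b\<in>S. m b) \<le> (k+1) * T" using assms(2) by (intro mult_left_mono) auto
    finally show False by simp
  qed
  thus ?thesis by (intro exI[of _ S]) (auto simp: S_def)
qed

lemma double_count:
  assumes "finite A" "finite B" "\<forall>a\<in>A. F a \<subseteq> B"
  shows "(\<Sum>b\<in>B. card {a\<in>A. b \<in> F a}) = (\<Sum>a\<in>A. card (F a))"
proof -
  have "(\<Sum>b\<in>B. card {a\<in>A. b \<in> F a}) = (\<Sum>b\<in>B. \<Sum>a\<in>A. if b \<in> F a then 1 else 0)"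
    using assms by (simp add: sum.If_cases Int_def)
  also have "\<dots> = (\<Sum>a\<in>A. \<Sum>b\<in>B. if b \<in> F a then 1 else 0)" by (rule sum.swap)
  also have "\<dots> = (\<Sum>a\<in>A. card (F a))"
  proof (rule sum.cong)
    fix a assume "a \<in> A"
    hence "F a = {b\<in>B. b \<in> F a}" using assms by auto
    thus "(\<Sum>b\<in>B. if b \<in> F a then 1 else 0) = card (F a)"
      using assms by (simp add: sum.If_cases) (metis Int_def)
  qed simp
  finally show ?thesis .
qed


lemma key:
  assumes G: "simple_graph V E" and v: "v \<in> V"
    and g'eq: "\<forall>x\<in>V - ({v} \<union> nbhd V E v). g' x = g x"
    and nw: "\<not> has_winning (V - {v}) (del_vertex_edges E v) g' q"
    and q: "q > 0"
    and ineq: "real (g v) / real q + (\<Sum>w\<in>nbhd V E v. real (g w) / real (g' w + 1)) < 1"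
  shows "\<not> has_winning V E g q"
proof
  assume "has_winning V E g q"
  then obtain f where fw: "is_winning V E g q f" unfolding has_winning_def by blast
  have fs: "\<And>x c. x \<in> V \<Longrightarrow> c \<in> nbhd V E x \<rightarrow>\<^sub>E {..<q} \<Longrightarrow> f x c \<subseteq> {..<q} \<and> card (f x c) \<le> g x"
    using fw unfolding is_winning_def is_strategy_def by blast
  have fwin: "\<forall>c\<in>V \<rightarrow>\<^sub>E {..<q}. \<exists>x\<in>V. c x \<in> f x (restrict c (nbhd V E x))"
    using fw unfolding is_winning_def by blast
  define N where "N = nbhd V E"
  define V' where "V' = V - {v}"
  define E' where "E' = del_vertex_edges E v"
  define N' where "N' = nbhd V' E'"
  have finV: "finite V" and symE: "\<And>x y. E x y \<Longrightarrow> E y x" and irr: "\<And>x. \<not> E x x"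
    and inV: "\<And>x y. E x y \<Longrightarrow> x \<in> V \<and> y \<in> V"
    using G unfolding simple_graph_def by blast+
  have N'eq: "N' x = N x - {v}" if "x \<noteq> v" for x
    using that unfolding N'_def N_def V'_def E'_def nbhd_def del_vertex_edges_def by auto
  have vNv: "v \<notin> N v" unfolding N_def nbhd_def using irr by auto
  have NvV': "N v \<subseteq> V'" unfolding N_def nbhd_def V'_def using irr by auto
  have finN: "finite (N x)" for x unfolding N_def nbhd_def using finV by simp
  define m where "m x d b = card {a\<in>{..<q}. b \<in> f x (d(v:=a))}" for x d b
  define P where "P x d S \<longleftrightarrow> S \<subseteq> {..<q} \<and> card S \<le> g' x \<and> (\<forall>b\<in>{..<q}-S. m x d b * (g' x + 1) \<le> q * g x)" for x d S
  define f' where "f' x d = (if E v x then (SOME S. P x d S) else f x d)" for x d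
  have upd: "d(v:=a) \<in> N x \<rightarrow>\<^sub>E {..<q}"
    if "x \<in> V'" "E v x" "d \<in> N' x \<rightarrow>\<^sub>E {..<q}" "a < q" for x d a
  proof -
    have "N x = insert v (N' x)" using that N'eq[of x] inV symE unfolding V'_def N_def nbhd_def by auto
    thus ?thesis using that by (auto simp: PiE_iff)
  qed
  have exP: "\<exists>S. P x d S" if x: "x \<in> V'" "E v x" "d \<in> N' x \<rightarrow>\<^sub>E {..<q}" for x d
  proof -
    have xV: "x \<in> V" using x V'_def by auto
    have sub: "\<forall>a\<in>{..<q}. f x (d(v:=a)) \<subseteq> {..<q} \<and> card (f x (d(v:=a))) \<le> g x"
      using fs[OF xV] upd[OF x] unfolding N_def by auto
    have "(\<Sum>b\<in>{..<q}. m x d b) = (\<Sum>a\<in>{..<q}. card (f x (d(v:=a))))"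
      unfolding m_def by (rule double_count) (use sub in auto)
    also have "\<dots> \<le> q * g x" using sum_bounded_above[of "{..<q}" "\<lambda>a. card (f x (d(v:=a)))" "g x"] sub
      by auto
    finally obtain S where "S \<subseteq> {..<q}" "card S \<le> g' x" "\<forall>b\<in>{..<q} - S. m x d b * (g' x + 1) \<le> q * g x"
      using exists_small_set[of "{..<q}" "m x d" "q * g x" "g' x"] by auto
    thus ?thesis unfolding P_def by blast
  qed
  have f'strat: "is_strategy V' E' g' q f'"
    unfolding is_strategy_def
  proof (intro ballI)
    fix x d assume x: "x \<in> V'" and d: "d \<in> nbhd V' E' x \<rightarrow>\<^sub>E {..<q}"
    show "f' x d \<subseteq> {..<q} \<and> card (f' x d) \<le> g' x"
    proof (cases "E v x")
      case True
      have d': "d \<in> N' x \<rightarrow>\<^sub>E {..<q}" using d unfolding N'_def .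
      have "f' x d = (SOME S. P x d S)" using True by (simp add: f'_def)
      hence "P x d (f' x d)" using someI_ex[OF exP[OF x True d']] by simp
      thus ?thesis unfolding P_def by blast
    next
      case False
      have "N' x = N x" using N'eq[of x] x False symE unfolding V'_def N_def nbhd_def by auto
      moreover have "g' x = g x" using g'eq x False unfolding V'_def nbhd_def by auto
      ultimately show ?thesis using fs[of x d] x d False unfolding f'_def V'_def N'_def N_def by auto
    qed
  qed
  have "\<not> is_winning V' E' g' q f'" using nw unfolding has_winning_def V'_def E'_def by blast
  then obtain c' where c': "c' \<in> V' \<rightarrow>\<^sub>E {..<q}" and lose: "\<forall>x\<in>V'. c' x \<notin> f' x (restrict c' (N' x))"
    using f'strat unfolding is_winning_def N'_def by blast
  define B0 where "B0 = {a\<in>{..<q}. a \<in> f v (restrict c' (N v))}"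
  define B1 where "B1 w = {a\<in>{..<q}. c' w \<in> f w (restrict (c'(v:=a)) (N w))}" for w
  have rc: "restrict c' (N v) \<in> N v \<rightarrow>\<^sub>E {..<q}" using c' NvV' by auto
  have cB0: "card B0 \<le> g v"
  proof -
    have "card B0 \<le> card (f v (restrict c' (N v)))" unfolding B0_def
      by (rule card_mono) (use fs[OF v rc[unfolded N_def]] in \<open>auto simp: N_def intro: finite_subset\<close>)
    also have "\<dots> \<le> g v" using fs[OF v rc[unfolded N_def]] unfolding N_def by blast
    finally show ?thesis .
  qed
  have cB1: "real (card (B1 w)) \<le> real q * real (g w) / real (g' w + 1)" if w: "w \<in> N v" for w
  proof -
    have wV': "w \<in> V'" using w NvV' by auto
    have Evw: "E v w" using w unfolding N_def nbhd_def by auto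
    define d where "d = restrict c' (N' w)"
    have wv: "w \<noteq> v" using wV' V'_def by auto
    have vNw: "v \<in> N w" using Evw symE inV unfolding N_def nbhd_def by auto
    have "restrict (c'(v:=a)) (N w) = d(v:=a)" for a
    proof
      fix y show "restrict (c'(v:=a)) (N w) y = (d(v:=a)) y"
        using vNw N'eq[OF wv] unfolding d_def by (cases "y = v") auto
    qed
    hence B1eq: "B1 w = {a\<in>{..<q}. c' w \<in> f w (d(v:=a))}" unfolding B1_def by simp
    have "c' w \<in> {..<q}" using c' wV' by auto
    moreover have "c' w \<notin> f' w d" using lose wV' unfolding d_def by blast
    moreover have dd: "d \<in> N' w \<rightarrow>\<^sub>E {..<q}" unfolding d_def using c' N'eq[OF wv] unfolding N'_def nbhd_def V'_def
      by auto
    moreover have "P w d (f' w d)"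
    proof -
      have "f' w d = (SOME S. P w d S)" using Evw by (simp add: f'_def)
      thus ?thesis using someI_ex[OF exP[OF wV' Evw dd]] by simp
    qed
    ultimately have "m w d (c' w) * (g' w + 1) \<le> q * g w" unfolding P_def by blast
    hence "card (B1 w) * (g' w + 1) \<le> q * g w" unfolding B1eq m_def by simp
    hence "real (card (B1 w) * (g' w + 1)) \<le> real (q * g w)"
      by (simp only: of_nat_le_iff)
    hence "real (card (B1 w)) * real (g' w + 1) \<le> real q * real (g w)"
      by (simp only: of_nat_mult)
    thus ?thesis by (simp add: field_simps)
  qed
  define Bad where "Bad = B0 \<union> (\<Union>w\<in>N v. B1 w)"
  have u1: "card Bad \<le> card B0 + card (\<Union>w\<in>N v. B1 w)" unfolding Bad_def by (rule card_Un_le)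
  have u2: "card (\<Union>w\<in>N v. B1 w) \<le> (\<Sum>w\<in>N v. card (B1 w))" by (rule card_UN_le) (rule finN)
  have n: "card Bad \<le> g v + (\<Sum>w\<in>N v. card (B1 w))" using u1 u2 cB0 by linarith
  have "real (card Bad) \<le> real (g v + (\<Sum>w\<in>N v. card (B1 w)))" using n by (simp only: of_nat_le_iff)
  also have "\<dots> = real (g v) + (\<Sum>w\<in>N v. real (card (B1 w)))" by (simp only: of_nat_add of_nat_sum)
  also have "\<dots> \<le> real (g v) + (\<Sum>w\<in>N v. real q * real (g w) / real (g' w + 1))"
    using cB1 by (intro add_left_mono sum_mono) auto
  also have "\<dots> = real q * (real (g v) / real q + (\<Sum>w\<in>N v. real (g w) / real (g' w + 1)))"
    using q by (simp add: distrib_left sum_distrib_left)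
  also have "\<dots> < real q * 1" using ineq q unfolding N_def by (intro mult_strict_left_mono) auto
  finally have "card Bad < card {..<q}" by simp
  moreover have "Bad \<subseteq> {..<q}" unfolding Bad_def B0_def B1_def by blast
  hence "finite Bad" using finite_subset by blast
  ultimately have "\<not> {..<q} \<subseteq> Bad" using card_mono[of Bad "{..<q}"] by linarith
  then obtain a where a: "a \<in> {..<q}" "a \<notin> Bad" by blast
  define c where "c = c'(v:=a)"
  have cin: "c \<in> V \<rightarrow>\<^sub>E {..<q}" using c' a v unfolding c_def V'_def by (auto simp: PiE_iff extensional_def)
  then obtain x where x: "x \<in> V" "c x \<in> f x (restrict c (nbhd V E x))" using fwin by blast
  have x2: "c x \<in> f x (restrict c (N x))" using x(2) unfolding N_def .
  show False
  proof (cases "x = v")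
    case True
    have r: "restrict c (N v) = restrict c' (N v)" using vNv unfolding c_def by auto
    have cv: "c v = a" unfolding c_def by simp
    have "a \<in> f v (restrict c' (N v))" using x2 True r cv by simp
    hence "a \<in> B0" using a(1) unfolding B0_def by blast
    thus False using a(2) unfolding Bad_def by blast
  next
    case xv: False
    have cx: "c x = c' x" unfolding c_def using xv by simp
    show False
    proof (cases "E v x")
      case True
      hence xN: "x \<in> N v" using x unfolding N_def nbhd_def by auto
      have "a \<in> B1 x \<longleftrightarrow> a < q \<and> c' x \<in> f x (restrict c (N x))" unfolding B1_def c_def by simp
      hence "a \<in> B1 x" using x2 cx a(1) by simp
      thus False using a(2) xN unfolding Bad_def by blast
    next
      case False
      have xV': "x \<in> V'" using x xv V'_def by auto
      have NN: "N' x = N x" using N'eq[OF xv] False symE unfolding N_def nbhd_def by auto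
      have vN: "v \<notin> N x" using False symE unfolding N_def nbhd_def by auto
      have "restrict c (N x) = restrict c' (N x)" using vN unfolding c_def by auto
      hence r: "restrict c (N x) = restrict c' (N' x)" using NN by simp
      have ff: "f' x (restrict c' (N' x)) = f x (restrict c' (N' x))" using False by (simp add: f'_def)
      have "c' x \<in> f' x (restrict c' (N' x))" using x2 cx r ff by simp
      thus False using lose xV' by blast
    qed
  qed
qed

lemma del_simple:
  assumes "simple_graph V E"
  shows "simple_graph (V - {v}) (del_vertex_edges E v)"
  using assms unfolding simple_graph_def del_vertex_edges_def by auto

lemma no_win_empty: "\<not> has_winning {} E g q"
proof
  assume "has_winning {} E g q"
  then obtain f where "is_winning {} E g q f" unfolding has_winning_def by blast
  hence "\<forall>c\<in>{} \<rightarrow>\<^sub>E {..<q}. \<exists>x\<in>{}. c x \<in> f x (restrict c (nbhd {} E x))"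
    unfolding is_winning_def by blast
  thus False by simp
qed

lemma bounded:
  assumes "finite V"
  shows "\<And>E g. simple_graph V E \<Longrightarrow> \<exists>B. \<forall>q>B. \<not> has_winning V E g q"
  using assms
proof (induction V rule: finite_induct)
  case empty
  then show ?case using no_win_empty by blast
next
  case (insert v F)
  define V where "V = insert v F"
  have G: "simple_graph V E" using insert V_def by simp
  have vV: "v \<in> V" using V_def by simp
  have VF: "V - {v} = F" using V_def insert by auto
  define n where "n = card (nbhd V E v)"
  define g' where "g' x = (if E v x then 2 * n * g x else g x)" for x
  obtain B' where B': "\<forall>q>B'. \<not> has_winning F (del_vertex_edges E v) g' q"
    using insert.IH[OF del_simple[OF G, of v, unfolded VF]] by blast
  have sumle: "(\<Sum>w\<in>nbhd V E v. real (g w) / real (g' w + 1)) \<le> 1/2"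
  proof (cases "n = 0")
    case True
    have "finite (nbhd V E v)" using G unfolding simple_graph_def nbhd_def by simp
    hence "nbhd V E v = {}" using True n_def by simp
    thus ?thesis by simp
  next
    case False
    have "(\<Sum>w\<in>nbhd V E v. real (g w) / real (g' w + 1)) \<le> (\<Sum>w\<in>nbhd V E v. 1 / (2 * real n))"
    proof (rule sum_mono)
      fix w assume "w \<in> nbhd V E v"
      hence "g' w = 2 * n * g w" unfolding g'_def nbhd_def by simp
      hence h: "real (g w) * (2 * real n) \<le> real (g' w + 1)" by simp
      have d: "real (g' w + 1) > 0" "2 * real n > 0" using False by auto
      show "real (g w) / real (g' w + 1) \<le> 1 / (2 * real n)"
        using h d by (simp add: frac_le_eq divide_le_eq le_divide_eq)
    qed
    also have "\<dots> = 1/2" using False n_def by simp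
    finally show ?thesis .
  qed
  show ?case
  proof (intro exI[of _ "max B' (2 * g v)"] allI impI)
    fix q assume q: "q > max B' (2 * g v)"
    have "real (g v) / real q < 1/2" using q by (simp add: field_simps)
    hence ineq: "real (g v) / real q + (\<Sum>w\<in>nbhd V E v. real (g w) / real (g' w + 1)) < 1"
      using sumle by linarith
    have "\<forall>x\<in>V - ({v} \<union> nbhd V E v). g' x = g x" unfolding g'_def nbhd_def by auto
    moreover have "\<not> has_winning (V - {v}) (del_vertex_edges E v) g' q" using B' q VF by auto
    ultimately have "\<not> has_winning V E g q" using key[OF G vV _ _ _ ineq] q by auto
    thus "\<not> has_winning (insert v F) E g q" using V_def by simp
  qed
qed

theorem proposition2p1:
  fixes V :: "'a set" and E :: "'a \<Rightarrow> 'a \<Rightarrow> bool" and g g' :: "'a \<Rightarrow> nat"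
    and v :: 'a and q :: nat
  assumes "simple_graph V E"
    and "v \<in> V"
    and "\<forall>x\<in>V. g x > 0"
    and "\<forall>x\<in>V - {v}. g' x > 0"
    and "\<forall>x\<in>V - ({v} \<union> nbhd V E v). g' x = g x"
    and "q > HG (V - {v}) (del_vertex_edges E v) g'"
    and "real (g v) / real q + (\<Sum>w\<in>nbhd V E v. real (g w) / real (g' w + 1)) < 1"
  shows "q > HG V E g"
proof -
  have finV: "finite V" using assms(1) unfolding simple_graph_def by blast
  obtain B' where B': "\<forall>q>B'. \<not> has_winning (V - {v}) (del_vertex_edges E v) g' q"
    using bounded[OF _ del_simple[OF assms(1)], of v g'] finV by blast
  define S' where "S' = {q. has_winning (V - {v}) (del_vertex_edges E v) g' q}"
  have bdd: "bdd_above S'" unfolding S'_def bdd_above_def using B' not_le by blast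
  have qS': "q \<notin> S'"
  proof
    assume "q \<in> S'"
    hence "q \<le> Sup S'" using bdd by (rule cSup_upper)
    thus False using assms(6) unfolding HG_def S'_def by simp
  qed
  have q0: "q > 0" using assms(6) by simp
  have nw: "\<not> has_winning V E g q'" if "q' \<ge> q" for q'
  proof -
    have "real (g v) / real q' \<le> real (g v) / real q"
      using that q0 by (intro divide_left_mono) auto
    hence ineq: "real (g v) / real q' + (\<Sum>w\<in>nbhd V E v. real (g w) / real (g' w + 1)) < 1"
      using assms(7) by linarith
    have "\<not> has_winning (V - {v}) (del_vertex_edges E v) g' q'"
    proof
      assume "has_winning (V - {v}) (del_vertex_edges E v) g' q'"
      hence "q' \<le> Sup S'" using bdd unfolding S'_def by (intro cSup_upper) auto
      moreover have "Sup S' < q" using assms(6) unfolding HG_def S'_def by simp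
      ultimately show False using that by simp
    qed
    thus ?thesis using key[OF assms(1) assms(2) assms(5) _ _ ineq] that q0 by auto
  qed
  define S where "S = {q. has_winning V E g q}"
  show ?thesis
  proof (cases "S = {}")
    case True
    have "HG V E g = Sup S" by (simp add: HG_def S_def)
    thus ?thesis using True q0 by simp
  next
    case False
    have "\<forall>x\<in>S. x \<le> q - 1"
    proof
      fix x assume "x \<in> S"
      hence "\<not> q \<le> x" using nw unfolding S_def by blast
      thus "x \<le> q - 1" by simp
    qed
    hence "Sup S \<le> q - 1" using False by (intro cSup_least) auto
    moreover have "HG V E g = Sup S" by (simp add: HG_def S_def)
    ultimately show ?thesis using q0 by simp
  qed
qed

end
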